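(* Consider a Markov coding game and the MEME sender policy constructed from an MDP policy $\pi$ (as described in the context). Fix a time $t$, a history $h^t=(s^0,a^0,\dots,s^t)$ and the corresponding posterior $b^t$ over messages. For a decision rule $\sigma:\mathcal{M}\to\Delta(\mathcal{A})$, let $M\sim b^t$, $A^t\sim\sigma(M)$, $S^{t+1}\sim\mathcal{T}(s^t,A^t)$, and $H^{t+1}=(h^t,A^t,S^{t+1})$. Among all decision rules $\sigma$ satisfying the marginal constraint $\sum_{m} b^t(m)\sigma(m)(a)=\pi(s^t)(a)$ for all $a\in\mathcal{A}$, the MEME decision rule $\sigma(m)=\nu(A\mid M=m)$ with $\nu=\mathrm{MEC}(b^t,\pi(s^t))$ maximizes the mutual information $\mathcal{I}(M;H^{t+1}\mid b^t,h^t)$.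
   Context: A (finite, episodic) Markov decision process is $\langle \mathcal{S},\mathcal{A},\mathcal{R},\mathcal{T}\rangle$ with finite state set $\mathcal{S}$, finite action set $\mathcal{A}$, reward $\mathcal{R}:\mathcal{S}\times\mathcal{A}\to\mathbb{R}$ and transition function $\mathcal{T}:\mathcal{S}\times\mathcal{A}\to\Delta(\mathcal{S})$. A Markov coding game (MCG) is $\langle(\mathcal{S},\mathcal{A},\mathcal{T},\mathcal{R}),\mathcal{M},\mu,\zeta\rangle$ where $\mathcal{M}$ is a finite message set, $\mu\in\Delta(\mathcal{M})$ is the prior, and $\zeta\ge 0$. A message $M\sim\mu$ is revealed to the sender, who plays the MDP with a message-conditional policy, producing a trajectory observed by the receiver. A minimum entropy coupling $\mathrm{MEC}(p,q)$ of distributions $p\in\Delta(\mathcal{M})$ and $q\in\Delta(\mathcal{A})$ is a joint distribution $\nu$ on $\mathcal{M}\times\mathcal{A}$ whose marginals are $p$ and $q$ and whose joint entropy $\mathcal{H}(M,A)$ is minimal among all such joint distributions. MEME sender: given an MDP policy $\pi:\mathcal{S}\to\Delta(\mathcal{A})$, set $b^0=\mu$; at time $t$ in state $s^t$ with current posterior $b^t=\mathcal{P}(M\mid h^t,\pi_{\mid M}^{:t})$ over the message given the history and the sender's past policy, compute $\nu=\mathrm{MEC}(b^t,\pi(s^t))$ and act according to $\pi_{\mid M}(s^t,m)=\nu(A\mid M=m)$; the posterior is then updated by Bayes' rule. Mutual information is $\mathcal{I}(X;Y)=\mathcal{H}(X)-\mathcal{H}(X\mid Y)$ with $\mathcal{H}$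 the Shannon entropy. *)

theory Defs
  imports Complex_Main
begin

definition is_dist :: "('x::finite \<Rightarrow> real) \<Rightarrow> bool" where
  "is_dist p \<longleftrightarrow> (\<forall>x. 0 \<le> p x) \<and> (\<Sum>x\<in>UNIV. p x) = 1"

definition shannon_entropy :: "'x set \<Rightarrow> ('x \<Rightarrow> real) \<Rightarrow> real" where
  "shannon_entropy X p = - (\<Sum>x\<in>X. if p x = 0 then 0 else p x * log 2 (p x))"

definition couplings :: "('m::finite \<Rightarrow> real) \<Rightarrow> ('a::finite \<Rightarrow> real) \<Rightarrow> ('m \<Rightarrow> 'a \<Rightarrow> real) set" where
  "couplings p q = {\<nu>. (\<forall>m a. 0 \<le> \<nu> m a) \<and> (\<forall>m. (\<Sum>a\<in>UNIV. \<nu> m a) = p m)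
                        \<and> (\<forall>a. (\<Sum>m\<in>UNIV. \<nu> m a) = q a)}"

definition joint_entropy :: "('m::finite \<Rightarrow> 'a::finite \<Rightarrow> real) \<Rightarrow> real" where
  "joint_entropy \<nu> = shannon_entropy UNIV (\<lambda>(m, a). \<nu> m a)"

definition is_MEC :: "('m::finite \<Rightarrow> real) \<Rightarrow> ('a::finite \<Rightarrow> real) \<Rightarrow> ('m \<Rightarrow> 'a \<Rightarrow> real) \<Rightarrow> bool" where
  "is_MEC p q \<nu> \<longleftrightarrow> \<nu> \<in> couplings p q \<and> (\<forall>\<nu>'\<in>couplings p q. joint_entropy \<nu> \<le> joint_entropy \<nu>')"

text \<open>Mutual information I(X;Y) = H(X) - H(X|Y) of a joint distribution J supported on X \<times> Y.\<close>
definition mutual_information :: "'x set \<Rightarrow> 'y set \<Rightarrow> ('x \<Rightarrow> 'y \<Rightarrow> real) \<Rightarrow> real" where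
  "mutual_information X Y J =
     (let px = (\<lambda>x. \<Sum>y\<in>Y. J x y); py = (\<lambda>y. \<Sum>x\<in>X. J x y) in
      shannon_entropy X px
      - (- (\<Sum>x\<in>X. \<Sum>y\<in>Y. if J x y = 0 then 0 else J x y * log 2 (J x y / py y))))"

definition decision_rule :: "('m \<Rightarrow> 'a::finite \<Rightarrow> real) \<Rightarrow> bool" where
  "decision_rule \<sigma> \<longleftrightarrow> (\<forall>m. is_dist (\<sigma> m))"

definition marginal_constraint :: "('m::finite \<Rightarrow> real) \<Rightarrow> ('m \<Rightarrow> 'a \<Rightarrow> real) \<Rightarrow> ('a \<Rightarrow> real) \<Rightarrow> bool" where
  "marginal_constraint b \<sigma> q \<longleftrightarrow> (\<forall>a. (\<Sum>m\<in>UNIV. b m * \<sigma> m a) = q a)"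

text \<open>Histories h^t = (s^0,a^0,...,s^t) are represented as (list of (s^i,a^i) for i<t, s^t).
  H^{t+1} = (h^t, A^t, S^{t+1}).\<close>
type_synonym ('s, 'a) history = "('s \<times> 'a) list \<times> 's"

definition next_history_values :: "('s, 'a) history \<Rightarrow> (('s, 'a) history \<times> 'a \<times> 's) set" where
  "next_history_values h = {(h, a, s') | a s'. True}"

definition next_history_joint ::
  "('s \<Rightarrow> 'a \<Rightarrow> 's \<Rightarrow> real) \<Rightarrow> ('s, 'a) history \<Rightarrow> ('m \<Rightarrow> real) \<Rightarrow> ('m \<Rightarrow> 'a \<Rightarrow> real)
     \<Rightarrow> 'm \<Rightarrow> (('s, 'a) history \<times> 'a \<times> 's) \<Rightarrow> real" where
  "next_history_joint T h b \<sigma> m y =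
     (case y of (h', a, s') \<Rightarrow> if h' = h then b m * \<sigma> m a * T (snd h) a s' else 0)"

definition info_next_history ::
  "('s::finite \<Rightarrow> 'a::finite \<Rightarrow> 's \<Rightarrow> real) \<Rightarrow> ('s, 'a) history \<Rightarrow> ('m::finite \<Rightarrow> real)
     \<Rightarrow> ('m \<Rightarrow> 'a \<Rightarrow> real) \<Rightarrow> real" where
  "info_next_history T h b \<sigma> =
     mutual_information UNIV (next_history_values h) (next_history_joint T h b \<sigma>)"

end

theory Submission
  imports Defs
begin

lemma shannon_simp: "shannon_entropy X p = - (\<Sum>x\<in>X. p x * log 2 (p x))"
  unfolding shannon_entropy_def by (intro arg_cong[where f=uminus] sum.cong) auto

lemma sum_nhv:
  fixes f :: "('s::finite, 'a::finite) history \<times> 'a \<times> 's \<Rightarrow> real"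
  shows "sum f (next_history_values h) = (\<Sum>a\<in>UNIV. \<Sum>s'\<in>UNIV. f (h, a, s'))"
proof -
  have e: "next_history_values h = (\<lambda>(a,s'). (h,a,s')) ` (UNIV \<times> UNIV)"
    unfolding next_history_values_def by auto
  have i: "inj_on (\<lambda>(a::'a,s'::'s). (h,a,s')) (UNIV \<times> UNIV)"
    by (auto simp: inj_on_def)
  show ?thesis unfolding e sum.reindex[OF i] sum.cartesian_product
    by (simp add: comp_def)
qed

lemma info_formula:
  fixes T :: "'s::finite \<Rightarrow> 'a::finite \<Rightarrow> 's \<Rightarrow> real"
    and h :: "('s, 'a) history"
    and b :: "'m::finite \<Rightarrow> real"
    and \<sigma> :: "'m \<Rightarrow> 'a \<Rightarrow> real"
  assumes T_dist: "\<forall>s a. is_dist (T s a)"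
    and b_nn: "\<forall>m. 0 \<le> b m"
    and dr: "decision_rule \<sigma>"
  shows "info_next_history T h b \<sigma> = shannon_entropy UNIV b
      + shannon_entropy UNIV (\<lambda>a. \<Sum>m\<in>UNIV. b m * \<sigma> m a)
      - joint_entropy (\<lambda>m a. b m * \<sigma> m a)"
proof -
  define s0 where "s0 = snd h"
  define v where "v = (\<lambda>m a. b m * \<sigma> m a)"
  define q where "q = (\<lambda>a. \<Sum>m\<in>UNIV. v m a)"
  have Tnn: "\<And>a s'. 0 \<le> T s0 a s'" and Ts: "\<And>a. (\<Sum>s'\<in>UNIV. T s0 a s') = 1"
    using T_dist by (auto simp: is_dist_def)
  have sig: "\<And>m a. 0 \<le> \<sigma> m a" "\<And>m. (\<Sum>a\<in>UNIV. \<sigma> m a) = 1"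
    using dr by (auto simp: decision_rule_def is_dist_def)
  have vnn: "\<And>m a. 0 \<le> v m a" unfolding v_def using b_nn sig by simp
  have J: "\<And>m a s'. next_history_joint T h b \<sigma> m (h, a, s') = v m a * T s0 a s'"
    by (simp add: next_history_joint_def v_def s0_def)
  have px: "\<And>m. (\<Sum>y\<in>next_history_values h. next_history_joint T h b \<sigma> m y) = b m"
  proof -
    fix m
    have "(\<Sum>y\<in>next_history_values h. next_history_joint T h b \<sigma> m y)
        = (\<Sum>a\<in>UNIV. v m a * (\<Sum>s'\<in>UNIV. T s0 a s'))"
      by (simp add: sum_nhv J sum_distrib_left)
    also have "\<dots> = (\<Sum>a\<in>UNIV. b m * \<sigma> m a)" by (simp add: Ts v_def)
    also have "\<dots> = b m" by (simp add: sum_distrib_left[symmetric] sig)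
    finally show "(\<Sum>y\<in>next_history_values h. next_history_joint T h b \<sigma> m y) = b m" .
  qed
  have py: "\<And>a s'. (\<Sum>m\<in>UNIV. next_history_joint T h b \<sigma> m (h, a, s')) = q a * T s0 a s'"
    by (simp add: J q_def sum_distrib_right)
  have pt: "v m a * T s0 a s' * log 2 (v m a * T s0 a s' / (q a * T s0 a s'))
      = T s0 a s' * (v m a * log 2 (v m a) - v m a * log 2 (q a))" for m a s'
  proof (cases "v m a * T s0 a s' = 0")
    case True then show ?thesis by auto
  next
    case False
    then have vp: "v m a > 0" and tp: "T s0 a s' > 0" using vnn[of m a] Tnn[of a s']
      by (auto simp: less_le)
    have "v m a \<le> q a" unfolding q_def
      by (rule member_le_sum) (auto simp: vnn)
    then have qp: "q a > 0" using vp by simp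
    have "v m a * T s0 a s' / (q a * T s0 a s') = v m a / q a" using tp by simp
    then show ?thesis using vp qp by (simp add: log_divide algebra_simps)
  qed
  have CE: "(\<Sum>m\<in>UNIV. \<Sum>y\<in>next_history_values h.
        if next_history_joint T h b \<sigma> m y = 0 then 0 else
          next_history_joint T h b \<sigma> m y * log 2 (next_history_joint T h b \<sigma> m y /
            (\<Sum>m'\<in>UNIV. next_history_joint T h b \<sigma> m' y)))
      = (\<Sum>m\<in>UNIV. \<Sum>a\<in>UNIV. v m a * log 2 (v m a)) - (\<Sum>a\<in>UNIV. q a * log 2 (q a))"
  proof -
    have "(\<Sum>m\<in>UNIV. \<Sum>y\<in>next_history_values h.
        if next_history_joint T h b \<sigma> m y = 0 then 0 else
          next_history_joint T h b \<sigma> m y * log 2 (next_history_joint T h b \<sigma> m y /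
            (\<Sum>m'\<in>UNIV. next_history_joint T h b \<sigma> m' y)))
      = (\<Sum>m\<in>UNIV. \<Sum>a\<in>UNIV. \<Sum>s'\<in>UNIV. T s0 a s' * (v m a * log 2 (v m a) - v m a * log 2 (q a)))"
    proof -
      have "\<And>m a s'. (if next_history_joint T h b \<sigma> m (h,a,s') = 0 then 0 else
          next_history_joint T h b \<sigma> m (h,a,s') * log 2 (next_history_joint T h b \<sigma> m (h,a,s') /
            (\<Sum>m'\<in>UNIV. next_history_joint T h b \<sigma> m' (h,a,s'))))
          = T s0 a s' * (v m a * log 2 (v m a) - v m a * log 2 (q a))"
      proof -
        fix m a s'
        have "(if v m a * T s0 a s' = 0 then 0 else v m a * T s0 a s' * log 2 (v m a * T s0 a s' / (q a * T s0 a s')))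
          = T s0 a s' * (v m a * log 2 (v m a) - v m a * log 2 (q a))"
          using pt[of m a s'] by (cases "v m a * T s0 a s' = 0") (simp_all only: if_True if_False mult_zero_left if_cancel)
        moreover have "(\<Sum>m'\<in>UNIV. v m' a * T s0 a s') = q a * T s0 a s'"
          by (simp add: q_def sum_distrib_right)
        ultimately show "?thesis m a s'" by (simp only: J)
      qed
      then show ?thesis by (simp add: sum_nhv)
    qed
    also have "\<dots> = (\<Sum>m\<in>UNIV. \<Sum>a\<in>UNIV. v m a * log 2 (v m a) - v m a * log 2 (q a))"
    proof -
      have "(\<Sum>s'\<in>UNIV. T s0 a s' * X) = X" for a X
        by (metis Ts sum_distrib_right mult_1)
      then show ?thesis by simp
    qed
    also have "\<dots> = (\<Sum>m\<in>UNIV. \<Sum>a\<in>UNIV. v m a * log 2 (v m a)) - (\<Sum>a\<in>UNIV. \<Sum>m\<in>UNIV. v m a * log 2 (q a))"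
      by (simp only: sum_subtractf sum.swap[of "\<lambda>m a. v m a * log 2 (q a)" UNIV UNIV])
    also have "\<dots> = (\<Sum>m\<in>UNIV. \<Sum>a\<in>UNIV. v m a * log 2 (v m a)) - (\<Sum>a\<in>UNIV. q a * log 2 (q a))"
      by (simp add: q_def sum_distrib_right)
    finally show ?thesis .
  qed
  have JE: "joint_entropy v = - (\<Sum>m\<in>UNIV. \<Sum>a\<in>UNIV. v m a * log 2 (v m a))"
    unfolding joint_entropy_def shannon_simp
    by (simp add: UNIV_Times_UNIV[symmetric] sum.cartesian_product split_def del: UNIV_Times_UNIV)
  show ?thesis
    unfolding info_next_history_def mutual_information_def Let_def px CE
    using JE by (simp add: shannon_simp q_def v_def)
qed

theorem proposition3:
  fixes T :: "'s::finite \<Rightarrow> 'a::finite \<Rightarrow> 's \<Rightarrow> real"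
    and \<pi> :: "'s \<Rightarrow> 'a \<Rightarrow> real"
    and h :: "('s, 'a) history"
    and b :: "'m::finite \<Rightarrow> real"
    and \<nu> :: "'m \<Rightarrow> 'a \<Rightarrow> real"
    and \<sigma>\<^sub>M\<^sub>E\<^sub>M\<^sub>E :: "'m \<Rightarrow> 'a \<Rightarrow> real"
  assumes T_dist: "\<forall>s a. is_dist (T s a)"
    and \<pi>_dist: "\<forall>s. is_dist (\<pi> s)"
    and b_dist: "is_dist b"
    and MEC: "is_MEC b (\<pi> (snd h)) \<nu>"
    and meme_rule: "decision_rule \<sigma>\<^sub>M\<^sub>E\<^sub>M\<^sub>E"
    and meme_cond: "\<forall>m a. 0 < b m \<longrightarrow> \<sigma>\<^sub>M\<^sub>E\<^sub>M\<^sub>E m a = \<nu> m a / b m"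
  shows "marginal_constraint b \<sigma>\<^sub>M\<^sub>E\<^sub>M\<^sub>E (\<pi> (snd h)) \<and>
         (\<forall>\<sigma>. decision_rule \<sigma> \<and> marginal_constraint b \<sigma> (\<pi> (snd h)) \<longrightarrow>
               info_next_history T h b \<sigma> \<le> info_next_history T h b \<sigma>\<^sub>M\<^sub>E\<^sub>M\<^sub>E)"
proof -
  have b_nn: "\<forall>m. 0 \<le> b m" using b_dist by (simp add: is_dist_def)
  have nu: "\<nu> \<in> couplings b (\<pi> (snd h))"
    and nu_min: "\<And>\<nu>'. \<nu>' \<in> couplings b (\<pi> (snd h)) \<Longrightarrow> joint_entropy \<nu> \<le> joint_entropy \<nu>'"
    using MEC by (auto simp: is_MEC_def)
  have eq: "(\<lambda>m a. b m * \<sigma>\<^sub>M\<^sub>E\<^sub>M\<^sub>E m a) = \<nu>"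
  proof (intro ext)
    fix m a
    show "b m * \<sigma>\<^sub>M\<^sub>E\<^sub>M\<^sub>E m a = \<nu> m a"
    proof (cases "b m = 0")
      case True
      have nn: "\<And>a. 0 \<le> \<nu> m a" and s: "(\<Sum>a\<in>UNIV. \<nu> m a) = b m"
        using nu by (auto simp: couplings_def)
      have "\<nu> m a = 0"
        using sum_nonneg_eq_0_iff[of UNIV "\<nu> m"] nn s True by auto
      then show ?thesis using True by simp
    next
      case False
      then have "b m > 0" using b_nn by (simp add: less_le)
      then show ?thesis using meme_cond by simp
    qed
  qed
  have mc: "marginal_constraint b \<sigma>\<^sub>M\<^sub>E\<^sub>M\<^sub>E (\<pi> (snd h))"
  proof -
    have eq2: "\<And>m a. b m * \<sigma>\<^sub>M\<^sub>E\<^sub>M\<^sub>E m a = \<nu> m a" using eq by metis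
    show ?thesis unfolding marginal_constraint_def eq2 using nu by (simp add: couplings_def)
  qed
  show ?thesis
  proof (intro conjI allI impI mc)
    fix \<sigma> assume a: "decision_rule \<sigma> \<and> marginal_constraint b \<sigma> (\<pi> (snd h))"
    have sig: "\<And>m a. 0 \<le> \<sigma> m a" "\<And>m. (\<Sum>a\<in>UNIV. \<sigma> m a) = 1"
      using a by (auto simp: decision_rule_def is_dist_def)
    have q: "(\<lambda>a. \<Sum>m\<in>UNIV. b m * \<sigma> m a) = \<pi> (snd h)"
      using a by (auto simp: marginal_constraint_def)
    have qM: "(\<lambda>a. \<Sum>m\<in>UNIV. b m * \<sigma>\<^sub>M\<^sub>E\<^sub>M\<^sub>E m a) = \<pi> (snd h)"
      using mc by (auto simp: marginal_constraint_def)
    have c: "(\<lambda>m a. b m * \<sigma> m a) \<in> couplings b (\<pi> (snd h))"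
      unfolding couplings_def using b_nn sig q
      by (auto simp: sum_distrib_left[symmetric] dest: fun_cong)
    show "info_next_history T h b \<sigma> \<le> info_next_history T h b \<sigma>\<^sub>M\<^sub>E\<^sub>M\<^sub>E"
      unfolding info_formula[OF T_dist b_nn conjunct1[OF a]] info_formula[OF T_dist b_nn meme_rule]
        q qM eq using nu_min[OF c] by simp
  qed
qed

end
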